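(* Let $\ket{W_4}=\frac12(|1000\rangle+|0100\rangle+|0010\rangle+|0001\rangle)$ and let $\mathcal G_{VI}$ be the graph on $\{A,B,C,D\}$ with edges $AB,AC,AD,BD$. Then $$\frac{3+\sqrt3}{6}\le P(W_4,\mathcal G_{VI}).$$
   Context: $P(\psi,\mathcal G)$: for a graph $\mathcal G=(V,E)$ on the four parties $A,B,C,D$ (each holding one qubit), the supremum over all LOCC protocols (local operations and classical communication, allowing arbitrarily many rounds) acting on a single copy of $\psi$ of $\sum_{(i,j)\in E}p_{ij}$, where $p_{ij}$ is the probability that the protocol ends with parties $i,j$ sharing a state local-unitarily equivalent to $\frac1{\sqrt2}(|00\rangle+|11\rangle)$ and all other parties in a product state. *)

theory Defs
  imports "HOL-Analysis.Analysis"
begin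

datatype party = A | B | C | D

lemma UNIV_party: "(UNIV :: party set) = {A, B, C, D}"
  using party.exhaust by auto

instance party :: finite
  by standard (simp add: UNIV_party)

text \<open>Computational basis of the four-qubit space: an assignment of a bit to each party.
  A (not necessarily normalised) state vector is a complex function on the basis.\<close>

type_synonym basis = "party \<Rightarrow> bool"
type_synonym state = "basis \<Rightarrow> complex"

text \<open>A single-qubit operator as a 2x2 matrix, indexed (output bit, input bit).\<close>
type_synonym qop = "bool \<Rightarrow> bool \<Rightarrow> complex"

definition nsq :: "state \<Rightarrow> real" where
  "nsq \<psi> = (\<Sum>x\<in>UNIV. (cmod (\<psi> x))\<^sup>2)"

definition apply_local :: "party \<Rightarrow> qop \<Rightarrow> state \<Rightarrow> state" where
  "apply_local k M \<psi> = (\<lambda>x. \<Sum>b\<in>UNIV. M (x k) b * \<psi> (x(k := b)))"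

definition apply_tensor :: "(party \<Rightarrow> qop) \<Rightarrow> state \<Rightarrow> state" where
  "apply_tensor U \<phi> = (\<lambda>x. \<Sum>y\<in>UNIV. (\<Prod>k\<in>UNIV. U k (x k) (y k)) * \<phi> y)"

definition unitary2 :: "qop \<Rightarrow> bool" where
  "unitary2 U \<longleftrightarrow> (\<forall>a c. (\<Sum>b\<in>UNIV. cnj (U b a) * U b c) = (if a = c then 1 else 0))"

definition complete_meas :: "qop list \<Rightarrow> bool" where
  "complete_meas Ms \<longleftrightarrow>
     (\<forall>a c. (\<Sum>M\<leftarrow>Ms. \<Sum>b\<in>UNIV. cnj (M b a) * M b c) = (if a = c then 1 else 0))"

definition bell_on :: "party \<Rightarrow> party \<Rightarrow> state" where
  "bell_on i j = (\<lambda>x. if x i = x j \<and> (\<forall>k. k \<noteq> i \<and> k \<noteq> j \<longrightarrow> \<not> x k)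
                      then complex_of_real (1 / sqrt 2) else 0)"

text \<open>Success for the pair (i,j): the (normalised) state is local-unitarily equivalent to
  the Bell state on i,j with all other parties in a product state (any product state of the
  other qubits is LU-equivalent to |0...0>). The scalar c absorbs norm and global phase.\<close>
definition success :: "party \<times> party \<Rightarrow> state \<Rightarrow> bool" where
  "success e \<psi> \<longleftrightarrow> fst e \<noteq> snd e \<and> \<psi> \<noteq> (\<lambda>_. 0) \<and>
     (\<exists>U c. (\<forall>k. unitary2 (U k)) \<and> \<psi> = (\<lambda>x. c * apply_tensor U (bell_on (fst e) (snd e)) x))"

text \<open>An LOCC protocol acting on a single copy: a finite tree. At each node one party performs
  a local measurement (a list of Kraus operators, one per outcome); the outcome is broadcast
  and the protocol continues with the subtree attached to that outcome (classical
  communication = dependence of all later steps on all earlier outcomes).\<close>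

datatype proto = Leaf | Node party "(qop \<times> proto) list"

fun valid :: "proto \<Rightarrow> bool" where
  "valid Leaf = True"
| "valid (Node k ch) = (complete_meas (map fst ch) \<and> (\<forall>p\<in>set ch. valid (snd p)))"

text \<open>Probability (given unnormalised branch state) that the protocol ends with success for e.\<close>
fun prob :: "proto \<Rightarrow> state \<Rightarrow> party \<times> party \<Rightarrow> real" where
  "prob Leaf \<psi> e = (if success e \<psi> then nsq \<psi> else 0)"
| "prob (Node k ch) \<psi> e = sum_list (map (\<lambda>p. prob (snd p) (apply_local k (fst p) \<psi>) e) ch)"

definition Pmax :: "state \<Rightarrow> (party \<times> party) set \<Rightarrow> ereal" where
  "Pmax \<psi> E = (SUP T\<in>{T. valid T}. ereal (\<Sum>e\<in>E. prob T \<psi> e))"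

definition W4 :: state where
  "W4 = (\<lambda>x. if card {k. x k} = 1 then complex_of_real (1/2) else 0)"

definition G_VI :: "(party \<times> party) set" where
  "G_VI = {(A, B), (A, C), (A, D), (B, D)}"

end

theory Submission
  imports Defs
begin

definition ind :: "party \<Rightarrow> basis" where "ind k = (\<lambda>j. j = k)"

lemma ind_inj: "ind j = ind k \<longleftrightarrow> j = k"
  unfolding ind_def by (metis)

definition Wst :: "(party \<Rightarrow> real) \<Rightarrow> state" where
  "Wst w = (\<lambda>x. \<Sum>k\<in>UNIV. if x = ind k then complex_of_real (sqrt (w k)) else 0)"

lemma Wst_ind: "Wst w (ind j) = complex_of_real (sqrt (w j))"
proof -
  have "(\<Sum>k\<in>UNIV. if ind j = ind k then complex_of_real (sqrt (w k)) else 0)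
      = (\<Sum>k\<in>UNIV. if j = k then complex_of_real (sqrt (w k)) else 0)"
    by (simp add: ind_inj)
  also have "\<dots> = complex_of_real (sqrt (w j))" by simp
  finally show ?thesis unfolding Wst_def .
qed

lemma Wst_not: "(\<forall>k. x \<noteq> ind k) \<Longrightarrow> Wst w x = 0"
  unfolding Wst_def by simp

definition dg :: "real \<Rightarrow> real \<Rightarrow> qop" where
  "dg s t = (\<lambda>u i. if u = i then complex_of_real (sqrt (if u then t else s)) else 0)"

lemma apply_local_dg:
  "apply_local k (dg s t) \<psi> = (\<lambda>x. complex_of_real (sqrt (if x k then t else s)) * \<psi> x)"
proof (rule ext)
  fix x
  have U: "(UNIV :: bool set) = {True, False}" by auto
  show "apply_local k (dg s t) \<psi> x = complex_of_real (sqrt (if x k then t else s)) * \<psi> x"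
    unfolding apply_local_def dg_def U by (cases "x k") (auto simp: fun_upd_idem)
qed

definition scale :: "party \<Rightarrow> real \<Rightarrow> real \<Rightarrow> (party \<Rightarrow> real) \<Rightarrow> (party \<Rightarrow> real)" where
  "scale k s t w = (\<lambda>j. if j = k then t * w j else s * w j)"

lemma apply_local_Wst: "apply_local k (dg s t) (Wst w) = Wst (scale k s t w)"
proof (rule ext)
  fix x
  show "apply_local k (dg s t) (Wst w) x = Wst (scale k s t w) x"
  proof (cases "\<exists>j. x = ind j")
    case True
    then obtain j where j: "x = ind j" by blast
    have "ind j k = (k = j)" by (simp add: ind_def)
    then show ?thesis
      unfolding apply_local_dg j Wst_ind scale_def
      by (auto simp: real_sqrt_mult)
  next
    case False
    then show ?thesis unfolding apply_local_dg by (simp add: Wst_not)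
  qed
qed

lemma cmod_Wst_sq:
  assumes "\<And>k. w k \<ge> 0"
  shows "(cmod (Wst w x))\<^sup>2 = (\<Sum>k\<in>UNIV. if x = ind k then w k else 0)"
proof (cases "\<exists>j. x = ind j")
  case True
  then obtain j where j: "x = ind j" by blast
  have "(\<Sum>k\<in>UNIV. if ind j = ind k then w k else 0) = (\<Sum>k\<in>UNIV. if j = k then w k else 0)"
    by (simp add: ind_inj)
  also have "\<dots> = w j" by simp
  finally show ?thesis using assms[of j] unfolding j Wst_ind by simp
next
  case False
  then show ?thesis by (simp add: Wst_not)
qed

lemma nsq_Wst:
  assumes "\<And>k. w k \<ge> 0"
  shows "nsq (Wst w) = (\<Sum>k\<in>UNIV. w k)"
proof -
  have "nsq (Wst w) = (\<Sum>x\<in>UNIV. \<Sum>k\<in>UNIV. if x = ind k then w k else 0)"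
    unfolding nsq_def using cmod_Wst_sq[OF assms] by simp
  also have "\<dots> = (\<Sum>k\<in>UNIV. \<Sum>x\<in>UNIV. if x = ind k then w k else 0)"
    by (rule sum.swap)
  also have "\<dots> = (\<Sum>k\<in>UNIV. w k)" by simp
  finally show ?thesis .
qed


definition Iop :: qop where "Iop = (\<lambda>a b. if a = b then 1 else 0)"
definition Xop :: qop where "Xop = (\<lambda>a b. if a \<noteq> b then 1 else 0)"

lemma unitary_Iop: "unitary2 Iop"
proof -
  have U: "(UNIV :: bool set) = {True, False}" by auto
  show ?thesis unfolding unitary2_def Iop_def U by auto
qed

lemma unitary_Xop: "unitary2 Xop"
proof -
  have U: "(UNIV :: bool set) = {True, False}" by auto
  show ?thesis unfolding unitary2_def Xop_def U by auto
qed

lemma prod_01: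
  "(\<Prod>k\<in>(UNIV::party set). (if P k then (1::complex) else 0)) = (if (\<forall>k. P k) then 1 else 0)"
proof (cases "\<forall>k. P k")
  case True then show ?thesis by simp
next
  case False
  then obtain k where "\<not> P k" by blast
  then have "\<exists>a\<in>UNIV. (if P a then (1::complex) else 0) = 0" by auto
  then show ?thesis using False by (simp add: prod_zero)
qed

lemma apply_tensor_flip:
  "apply_tensor (\<lambda>k. if k = j then Xop else Iop) \<phi> x = \<phi> (x(j := \<not> x j))"
proof -
  have P: "(\<Prod>k\<in>UNIV. (if k = j then Xop else Iop) (x k) (y k)) = (if y = x(j := \<not> x j) then 1 else 0)"
    for y
  proof -
    have "(\<Prod>k\<in>UNIV. (if k = j then Xop else Iop) (x k) (y k))
        = (\<Prod>k\<in>UNIV. (if y k = (x(j := \<not> x j)) k then (1::complex) else 0))"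
      by (rule prod.cong) (auto simp: Xop_def Iop_def)
    also have "\<dots> = (if (\<forall>k. y k = (x(j := \<not> x j)) k) then 1 else 0)" by (rule prod_01)
    also have "\<dots> = (if y = x(j := \<not> x j) then 1 else 0)" by (simp add: fun_eq_iff)
    finally show ?thesis .
  qed
  have "(\<Sum>y\<in>UNIV. (if y = x(j := \<not> x j) then 1 else 0) * \<phi> y)
      = (\<Sum>y\<in>UNIV. if y = x(j := \<not> x j) then \<phi> y else 0)"
    by (rule sum.cong) auto
  also have "\<dots> = \<phi> (x(j := \<not> x j))" by simp
  finally show ?thesis unfolding apply_tensor_def P .
qed

lemma Wst_pair:
  assumes ij: "i \<noteq> j" and wi: "w i = c" and wj: "w j = c" and wo: "\<And>k. k \<noteq> i \<Longrightarrow> k \<noteq> j \<Longrightarrow> w k = 0"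
  shows "Wst w x = (if x i \<noteq> x j \<and> (\<forall>k. k \<noteq> i \<and> k \<noteq> j \<longrightarrow> \<not> x k) then complex_of_real (sqrt c) else 0)"
proof (cases "\<exists>k. x = ind k")
  case True
  then obtain k where k: "x = ind k" by blast
  show ?thesis
  proof (cases "k = i")
    case True then show ?thesis using ij wi unfolding k Wst_ind by (auto simp: ind_def)
  next
    case ki: False
    show ?thesis
    proof (cases "k = j")
      case True then show ?thesis using ij wj unfolding k Wst_ind by (auto simp: ind_def)
    next
      case False then show ?thesis using ki wo[OF ki False] unfolding k Wst_ind by (auto simp: ind_def)
    qed
  qed
next
  case False
  have "\<not> (x i \<noteq> x j \<and> (\<forall>k. k \<noteq> i \<and> k \<noteq> j \<longrightarrow> \<not> x k))"
  proof
    assume h: "x i \<noteq> x j \<and> (\<forall>k. k \<noteq> i \<and> k \<noteq> j \<longrightarrow> \<not> x k)"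
    show False
    proof (cases "x i")
      case True
      then have "x = ind i" using h ij by (auto simp: ind_def fun_eq_iff)
      then show False using False by blast
    next
      case xf: False
      then have "x = ind j" using h ij by (auto simp: ind_def fun_eq_iff)
      then show False using False by blast
    qed
  qed
  note nc = this
  have w0: "Wst w x = 0" using False by (simp add: Wst_not)
  show ?thesis by (subst if_not_P[OF nc]) (rule w0)
qed

lemma success_pair:
  assumes ij: "i \<noteq> j" and wi: "w i = c" and wj: "w j = c" and wo: "\<And>k. k \<noteq> i \<Longrightarrow> k \<noteq> j \<Longrightarrow> w k = 0"
    and c: "c > 0"
  shows "success (i, j) (Wst w)"
proof -
  define U where "U = (\<lambda>k. if k = j then Xop else Iop)"
  have uU: "\<forall>k. unitary2 (U k)" unfolding U_def using unitary_Iop unitary_Xop by auto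
  have eq: "Wst w = (\<lambda>x. complex_of_real (sqrt (2 * c)) * apply_tensor U (bell_on i j) x)"
  proof (rule ext)
    fix x
    have s: "sqrt (2 * c) * (1 / sqrt 2) = sqrt c"
      by (simp add: real_sqrt_mult)
    define P where "P = (x i \<noteq> x j \<and> (\<forall>k. k \<noteq> i \<and> k \<noteq> j \<longrightarrow> \<not> x k))"
    have "apply_tensor U (bell_on i j) x = bell_on i j (x(j := \<not> x j))"
      unfolding U_def by (rule apply_tensor_flip)
    also have "\<dots> = (if P then complex_of_real (1 / sqrt 2) else 0)"
      unfolding bell_on_def P_def using ij by auto
    finally have at: "apply_tensor U (bell_on i j) x = (if P then complex_of_real (1 / sqrt 2) else 0)" .
    have ww: "Wst w x = (if P then complex_of_real (sqrt c) else 0)"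
      unfolding P_def by (rule Wst_pair[OF ij wi wj wo])
    show "Wst w x = complex_of_real (sqrt (2 * c)) * apply_tensor U (bell_on i j) x"
    proof (cases P)
      case True
      then show ?thesis unfolding at ww using s by (simp flip: of_real_mult) (metis of_real_divide)
    next
      case False
      then show ?thesis unfolding at ww by simp
    qed
  qed
  have nz: "Wst w \<noteq> (\<lambda>_. 0)"
  proof
    assume "Wst w = (\<lambda>_. 0)"
    then have "Wst w (ind i) = 0" by simp
    then show False using c wi by (simp add: Wst_ind)
  qed
  show ?thesis unfolding success_def using ij nz uU eq by auto
qed

lemma prob_nonneg: "prob T \<psi> e \<ge> 0"
proof (induction T arbitrary: \<psi>)
  case Leaf
  then show ?case by (simp add: nsq_def sum_nonneg)
next
  case (Node k ch)
  then show ?case by (auto intro!: sum_list_nonneg)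
qed

definition Val :: "proto \<Rightarrow> (party \<Rightarrow> real) \<Rightarrow> real" where
  "Val T w = (\<Sum>e\<in>G_VI. prob T (Wst w) e)"

lemma Val_nonneg: "Val T w \<ge> 0"
  unfolding Val_def by (simp add: sum_nonneg prob_nonneg)

lemma Val_Node2:
  "Val (Node k [(dg s1 t1, T1), (dg s2 t2, T2)]) w = Val T1 (scale k s1 t1 w) + Val T2 (scale k s2 t2 w)"
  unfolding Val_def by (simp add: apply_local_Wst sum.distrib)

lemma Val_Leaf_pair:
  assumes "(i, j) \<in> G_VI" and ij: "i \<noteq> j" and wi: "w i = c" and wj: "w j = c"
    and wo: "\<And>k. k \<noteq> i \<Longrightarrow> k \<noteq> j \<Longrightarrow> w k = 0" and c: "c \<ge> 0"
  shows "Val Leaf w \<ge> 2 * c"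
proof (cases "c = 0")
  case True then show ?thesis using Val_nonneg by simp
next
  case False
  then have cp: "c > 0" using c by simp
  have wn: "\<And>k. w k \<ge> 0" using wi wj wo c by (metis order.refl)
  have "(\<Sum>k\<in>UNIV. w k) = w i + w j"
  proof -
    have "(\<Sum>k\<in>UNIV. w k) = (\<Sum>k\<in>{i, j}. w k)"
      by (rule sum.mono_neutral_right) (auto intro: wo)
    then show ?thesis using ij by simp
  qed
  then have "prob Leaf (Wst w) (i, j) = 2 * c"
    using success_pair[OF ij wi wj wo cp] nsq_Wst[OF wn] wi wj by simp
  moreover have "prob Leaf (Wst w) (i, j) \<le> Val Leaf w"
    unfolding Val_def
    by (rule member_le_sum[OF assms(1)]) (simp_all only: prob_nonneg G_VI_def finite.emptyI finite_insert)
  ultimately show ?thesis by simp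
qed

lemma complete_dg2:
  assumes "s1 \<ge> 0" "s2 \<ge> 0" "t1 \<ge> 0" "t2 \<ge> 0" "s1 + s2 = 1" "t1 + t2 = 1"
  shows "complete_meas [dg s1 t1, dg s2 t2]"
proof -
  have U: "(UNIV :: bool set) = {True, False}" by auto
  have a: "complex_of_real (sqrt s1) * complex_of_real (sqrt s1) + complex_of_real (sqrt s2) * complex_of_real (sqrt s2) = 1"
    using assms by (simp flip: of_real_mult of_real_add)
  have b: "complex_of_real (sqrt t1) * complex_of_real (sqrt t1) + complex_of_real (sqrt t2) * complex_of_real (sqrt t2) = 1"
    using assms by (simp flip: of_real_mult of_real_add)
  show ?thesis unfolding complete_meas_def dg_def U using a b by auto
qed


lemma valid_Node2:
  assumes "s1 \<ge> 0" "s2 \<ge> 0" "t1 \<ge> 0" "t2 \<ge> 0" "s1 + s2 = 1" "t1 + t2 = 1" "valid T1" "valid T2"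
  shows "valid (Node k [(dg s1 t1, T1), (dg s2 t2, T2)])"
  using assms complete_dg2[OF assms(1-6)] by simp

definition wt :: "real \<Rightarrow> real \<Rightarrow> real \<Rightarrow> real \<Rightarrow> (party \<Rightarrow> real)" where
  "wt a b c d = (\<lambda>k. case k of A \<Rightarrow> a | B \<Rightarrow> b | C \<Rightarrow> c | D \<Rightarrow> d)"

lemma scale_wt:
  "scale A s t (wt a b c d) = wt (t*a) (s*b) (s*c) (s*d)"
  "scale B s t (wt a b c d) = wt (s*a) (t*b) (s*c) (s*d)"
  "scale C s t (wt a b c d) = wt (s*a) (s*b) (t*c) (s*d)"
  "scale D s t (wt a b c d) = wt (s*a) (s*b) (s*c) (t*d)"
  by (auto simp: scale_def wt_def fun_eq_iff split: party.split)

lemma leaf_BD: "b = d \<Longrightarrow> b \<ge> 0 \<Longrightarrow> Val Leaf (wt 0 b 0 d) \<ge> 2 * b"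
  by (rule Val_Leaf_pair[of B D]) (auto simp: G_VI_def wt_def split: party.split)
lemma leaf_AC: "a = c \<Longrightarrow> a \<ge> 0 \<Longrightarrow> Val Leaf (wt a 0 c 0) \<ge> 2 * a"
  by (rule Val_Leaf_pair[of A C]) (auto simp: G_VI_def wt_def split: party.split)
lemma leaf_AB: "a = b \<Longrightarrow> a \<ge> 0 \<Longrightarrow> Val Leaf (wt a b 0 0) \<ge> 2 * a"
  by (rule Val_Leaf_pair[of A B]) (auto simp: G_VI_def wt_def split: party.split)
lemma leaf_AD: "a = d \<Longrightarrow> a \<ge> 0 \<Longrightarrow> Val Leaf (wt a 0 0 d) \<ge> 2 * a"
  by (rule Val_Leaf_pair[of A D]) (auto simp: G_VI_def wt_def split: party.split)


lemma Val_wt_cong: "a = a' \<Longrightarrow> b = b' \<Longrightarrow> c = c' \<Longrightarrow> d = d' \<Longrightarrow> Val T (wt a b c d) = Val T (wt a' b' c' d')"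
  by simp

definition filtA :: "real \<Rightarrow> proto" where
  "filtA e = Node A [(dg 1 (1-e), Leaf), (dg 0 e, Leaf)]"
definition nodeD :: "real \<Rightarrow> proto \<Rightarrow> proto" where
  "nodeD e T = Node D [(dg e 0, Leaf), (dg (1-e) 1, T)]"
definition nodeB :: "real \<Rightarrow> proto \<Rightarrow> proto" where
  "nodeB e T = Node B [(dg e 0, filtA e), (dg (1-e) 1, nodeD e T)]"

fun FL :: "real \<Rightarrow> nat \<Rightarrow> proto" where
  "FL e 0 = Leaf"
| "FL e (Suc m) = Node A [(dg e 0, Leaf), (dg (1-e) 1, nodeB e (FL e m))]"

lemma L1:
  assumes "0 \<le> e" "e \<le> 1" "a \<ge> 0" "d = (1-e)*a"
  shows "Val (filtA e) (wt a 0 0 d) \<ge> 2*d"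
proof -
  have "Val (filtA e) (wt a 0 0 d) = Val Leaf (wt ((1-e)*a) 0 0 d) + Val Leaf (wt (e*a) 0 0 0)"
    by (simp add: filtA_def Val_Node2 scale_wt)
  moreover have "Val Leaf (wt ((1-e)*a) 0 0 d) \<ge> 2*((1-e)*a)"
    by (rule leaf_AD) (use assms in auto)
  ultimately show ?thesis using Val_nonneg[of Leaf "wt (e*a) 0 0 0"] assms by simp
qed

lemma L2:
  assumes "a = b" "e*a \<ge> 0"
  shows "Val (nodeD e T) (wt a b 0 d) \<ge> 2*(e*a) + Val T (wt ((1-e)*a) ((1-e)*b) 0 d)"
proof -
  have "Val (nodeD e T) (wt a b 0 d) = Val Leaf (wt (e*a) (e*b) 0 0) + Val T (wt ((1-e)*a) ((1-e)*b) 0 d)"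
    by (simp add: nodeD_def Val_Node2 scale_wt)
  moreover have "Val Leaf (wt (e*a) (e*b) 0 0) \<ge> 2*(e*a)"
    by (rule leaf_AB) (use assms in auto)
  ultimately show ?thesis by simp
qed

lemma L3:
  assumes "0 \<le> e" "e \<le> 1" "t \<ge> 0" "s = (1-e)*t"
  shows "Val (nodeB e T) (wt t s 0 s) \<ge> 4*(e* s) + Val (T::proto) (wt ((1-e)* s) ((1-e)* s) 0 ((1-e)* s))"
proof -
  have s0: "s \<ge> 0" using assms by simp
  have "Val (nodeB e T) (wt t s 0 s) = Val (filtA e) (wt (e*t) 0 0 (e* s)) + Val (nodeD e T) (wt ((1-e)*t) s 0 ((1-e)* s))"
    by (simp add: nodeB_def Val_Node2 scale_wt)
  moreover have "Val (filtA e) (wt (e*t) 0 0 (e* s)) \<ge> 2*(e* s)"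
    by (rule L1) (use assms in auto)
  moreover have "Val (nodeD e T) (wt ((1-e)*t) s 0 ((1-e)* s)) \<ge> 2*(e*((1-e)*t)) + Val T (wt ((1-e)*((1-e)*t)) ((1-e)* s) 0 ((1-e)* s))"
    by (rule L2) (use assms in auto)
  moreover have "Val T (wt ((1-e)*((1-e)*t)) ((1-e)* s) 0 ((1-e)* s)) = Val T (wt ((1-e)* s) ((1-e)* s) 0 ((1-e)* s))"
    using assms by simp
  ultimately show ?thesis using assms by simp
qed

lemma FL_val:
  assumes "0 \<le> e" "e \<le> 1"
  shows "t \<ge> 0 \<Longrightarrow> Val (FL e m) (wt t t 0 t) \<ge> 2*e*t*(3-2*e) * (\<Sum>k<m. ((1-e)^2)^k)"
proof (induction m arbitrary: t)
  case 0
  then show ?case using Val_nonneg by simp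
next
  case (Suc m)
  define S where "S = (\<Sum>k<m. ((1-e)^2)^k)"
  have s0: "(1-e)*t \<ge> 0" using assms Suc.prems by simp
  have e1: "Val (FL e (Suc m)) (wt t t 0 t) = Val Leaf (wt 0 (e*t) 0 (e*t)) + Val (nodeB e (FL e m)) (wt t ((1-e)*t) 0 ((1-e)*t))"
    by (simp add: Val_Node2 scale_wt)
  have e2: "Val Leaf (wt 0 (e*t) 0 (e*t)) \<ge> 2*(e*t)"
    by (rule leaf_BD) (use assms Suc.prems in auto)
  have e3: "Val (nodeB e (FL e m)) (wt t ((1-e)*t) 0 ((1-e)*t)) \<ge> 4*(e*((1-e)*t)) + Val (FL e m) (wt ((1-e)*((1-e)*t)) ((1-e)*((1-e)*t)) 0 ((1-e)*((1-e)*t)))"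
    by (rule L3) (use assms Suc.prems in auto)
  have e4: "Val (FL e m) (wt ((1-e)*((1-e)*t)) ((1-e)*((1-e)*t)) 0 ((1-e)*((1-e)*t))) \<ge> 2*e*((1-e)*((1-e)*t))*(3-2*e) * S"
    unfolding S_def by (rule Suc.IH) (use assms s0 in auto)
  have e5: "(\<Sum>k<Suc m. ((1-e)^2)^k) = 1 + (1-e)^2 * S"
    unfolding S_def by (subst sum.lessThan_Suc_shift) (simp add: sum_distrib_left)
  have e6: "2*(e*t) + 4*(e*((1-e)*t)) + 2*e*((1-e)*((1-e)*t))*(3-2*e) * S = 2*e*t*(3-2*e) * (1 + (1-e)^2 * S)"
    by (simp add: algebra_simps power2_eq_square)
  show ?case unfolding e5 using e1 e2 e3 e4 e6 by linarith
qed


lemma geo_mult: "(1 - x) * (\<Sum>k<n. x^k) = 1 - (x::real)^n"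
  using power_diff_1_eq[of x n] by (simp add: algebra_simps)

lemma FL_bound:
  assumes "0 < e" "e \<le> 1" "t \<ge> 0"
  shows "Val (FL e m) (wt t t 0 t) \<ge> 3*t*((1-e)*(1-((1-e)^2)^m))"
proof -
  define S where "S = (\<Sum>k<m. ((1-e)^2)^k)"
  have S0: "S \<ge> 0" unfolding S_def by (simp add: sum_nonneg)
  have g: "1 - ((1-e)^2)^m = e*(2-e)*S"
    using geo_mult[of "(1-e)^2" m] unfolding S_def by (simp add: algebra_simps power2_eq_square)
  have v: "Val (FL e m) (wt t t 0 t) \<ge> 2*e*t*(3-2*e) * S"
    unfolding S_def using FL_val assms by auto
  have "2*e*t*(3-2*e) * S - 3*t*((1-e)*(1-((1-e)^2)^m)) = (e*t*S)*(e*(5-3*e))"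
    unfolding g by (simp add: algebra_simps)
  moreover have "(e*t*S)*(e*(5-3*e)) \<ge> 0"
    using assms S0 by (intro mult_nonneg_nonneg) auto
  ultimately show ?thesis using v by linarith
qed

definition fullC :: proto where "fullC = Node C [(dg 1 0, Leaf), (dg 0 1, Leaf)]"
definition fullD :: proto where "fullD = Node D [(dg 1 0, Leaf), (dg 0 1, Leaf)]"
definition cycD :: "real \<Rightarrow> proto \<Rightarrow> proto" where
  "cycD p T = Node D [(dg (1-p) 0, fullC), (dg p 1, T)]"
definition cycB :: "real \<Rightarrow> proto \<Rightarrow> proto" where
  "cycB p T = Node B [(dg (1-p) 0, fullD), (dg p 1, cycD p T)]"
definition cycA :: "real \<Rightarrow> proto \<Rightarrow> proto" where
  "cycA p T = Node A [(dg (1-p) 0, fullC), (dg p 1, cycB p T)]"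

fun Cyc :: "real \<Rightarrow> real \<Rightarrow> nat \<Rightarrow> nat \<Rightarrow> proto" where
  "Cyc p e m 0 = Leaf"
| "Cyc p e m (Suc n) = Node C [(dg (1-p) 0, FL e m), (dg p 1, cycA p (Cyc p e m n))]"

lemma fullC_val: "Val fullC (wt a b c d) \<ge> Val Leaf (wt a b 0 d)"
proof -
  have "Val fullC (wt a b c d) = Val Leaf (wt a b 0 d) + Val Leaf (wt 0 0 c 0)"
    by (simp add: fullC_def Val_Node2 scale_wt)
  then show ?thesis using Val_nonneg[of Leaf "wt 0 0 c 0"] by simp
qed

lemma fullD_val: "Val fullD (wt a b c d) \<ge> Val Leaf (wt a b c 0)"
proof -
  have "Val fullD (wt a b c d) = Val Leaf (wt a b c 0) + Val Leaf (wt 0 0 0 d)"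
    by (simp add: fullD_def Val_Node2 scale_wt)
  then show ?thesis using Val_nonneg[of Leaf "wt 0 0 0 d"] by simp
qed

lemma cycD_val:
  assumes "0 \<le> p" "p \<le> 1" "x \<ge> 0"
  shows "Val (cycD p T) (wt x x x y) \<ge> 2*((1-p)*x) + Val T (wt (p*x) (p*x) (p*x) y)"
proof -
  have "Val (cycD p T) (wt x x x y) = Val fullC (wt ((1-p)*x) ((1-p)*x) ((1-p)*x) 0) + Val T (wt (p*x) (p*x) (p*x) y)"
    by (simp add: cycD_def Val_Node2 scale_wt)
  moreover have "Val fullC (wt ((1-p)*x) ((1-p)*x) ((1-p)*x) 0) \<ge> 2*((1-p)*x)"
    using fullC_val[where a="(1-p)*x" and b="(1-p)*x" and c="(1-p)*x" and d=0] leaf_AB[of "(1-p)*x" "(1-p)*x"] assms by auto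
  ultimately show ?thesis by simp
qed

lemma cycB_val:
  assumes "0 \<le> p" "p \<le> 1" "a \<ge> 0" "b = p*a"
  shows "Val (cycB p T) (wt a b a b) \<ge> 2*((1-p)*a) + 2*((1-p)*b) + Val T (wt (p*b) (p*b) (p*b) (p*b))"
proof -
  have "Val (cycB p T) (wt a b a b) = Val fullD (wt ((1-p)*a) 0 ((1-p)*a) ((1-p)*b)) + Val (cycD p T) (wt (p*a) b (p*a) (p*b))"
    by (simp add: cycB_def Val_Node2 scale_wt)
  moreover have "Val fullD (wt ((1-p)*a) 0 ((1-p)*a) ((1-p)*b)) \<ge> 2*((1-p)*a)"
    using fullD_val[where a="(1-p)*a" and b=0 and c="(1-p)*a" and d="(1-p)*b"] leaf_AC[of "(1-p)*a" "(1-p)*a"] assms by auto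
  moreover have "Val (cycD p T) (wt b b b (p*b)) \<ge> 2*((1-p)*b) + Val T (wt (p*b) (p*b) (p*b) (p*b))"
    by (rule cycD_val) (use assms in auto)
  moreover have "wt (p*a) b (p*a) (p*b) = wt b b b (p*b)" using assms by simp
  ultimately show ?thesis by simp
qed

lemma cycA_val:
  assumes "0 \<le> p" "p \<le> 1" "t \<ge> 0"
  shows "Val (cycA p T) (wt (p*t) (p*t) t (p*t)) \<ge> 2*((1-p)*(p*t)) + 2*((1-p)*(p*t)) + 2*((1-p)*(p*(p*t)))
          + Val T (wt (p*(p*(p*t))) (p*(p*(p*t))) (p*(p*(p*t))) (p*(p*(p*t))))"
proof -
  have "Val (cycA p T) (wt (p*t) (p*t) t (p*t)) = Val fullC (wt 0 ((1-p)*(p*t)) ((1-p)*t) ((1-p)*(p*t))) + Val (cycB p T) (wt (p*t) (p*(p*t)) (p*t) (p*(p*t)))"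
    by (simp add: cycA_def Val_Node2 scale_wt)
  moreover have "Val fullC (wt 0 ((1-p)*(p*t)) ((1-p)*t) ((1-p)*(p*t))) \<ge> 2*((1-p)*(p*t))"
    using fullC_val[where a=0 and b="(1-p)*(p*t)" and c="(1-p)*t" and d="(1-p)*(p*t)"] leaf_BD[of "(1-p)*(p*t)" "(1-p)*(p*t)"] assms by auto
  moreover have "Val (cycB p T) (wt (p*t) (p*(p*t)) (p*t) (p*(p*t))) \<ge> 2*((1-p)*(p*t)) + 2*((1-p)*(p*(p*t))) + Val T (wt (p*(p*(p*t))) (p*(p*(p*t))) (p*(p*(p*t))) (p*(p*(p*t))))"
    by (rule cycB_val) (use assms in auto)
  ultimately show ?thesis by linarith
qed


lemma Cyc_val:
  assumes "0 \<le> p" "p \<le> 1" "0 < e" "e \<le> 1"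
  shows "t \<ge> 0 \<Longrightarrow> Val (Cyc p e m n) (wt t t t t) \<ge>
     t * (3*(1-p)*((1-e)*(1-((1-e)^2)^m)) + 4*(1-p)*p + 2*(1-p)*p^2) * (\<Sum>k<n. (p^3)^k)"
proof (induction n arbitrary: t)
  case 0
  then show ?case using Val_nonneg by simp
next
  case (Suc n)
  define \<eta> where "\<eta> = (1-e)*(1-((1-e)^2)^m)"
  define g where "g = 3*(1-p)*\<eta> + 4*(1-p)*p + 2*(1-p)*p^2"
  define S where "S = (\<Sum>k<n. (p^3)^k)"
  have c1: "Val (Cyc p e m (Suc n)) (wt t t t t) = Val (FL e m) (wt ((1-p)*t) ((1-p)*t) 0 ((1-p)*t)) + Val (cycA p (Cyc p e m n)) (wt (p*t) (p*t) t (p*t))"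
    by (simp add: Val_Node2 scale_wt)
  have c2: "Val (FL e m) (wt ((1-p)*t) ((1-p)*t) 0 ((1-p)*t)) \<ge> 3*((1-p)*t)*\<eta>"
    unfolding \<eta>_def by (rule FL_bound) (use assms Suc.prems in auto)
  have c3: "Val (cycA p (Cyc p e m n)) (wt (p*t) (p*t) t (p*t)) \<ge> 2*((1-p)*(p*t)) + 2*((1-p)*(p*t)) + 2*((1-p)*(p*(p*t)))
          + Val (Cyc p e m n) (wt (p*(p*(p*t))) (p*(p*(p*t))) (p*(p*(p*t))) (p*(p*(p*t))))"
    by (rule cycA_val) (use assms Suc.prems in auto)
  have c4: "Val (Cyc p e m n) (wt (p*(p*(p*t))) (p*(p*(p*t))) (p*(p*(p*t))) (p*(p*(p*t)))) \<ge> (p*(p*(p*t))) * g * S"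
    unfolding g_def \<eta>_def S_def by (rule Suc.IH) (use assms Suc.prems in auto)
  have c5: "(\<Sum>k<Suc n. (p^3)^k) = 1 + p^3 * S"
    unfolding S_def by (subst sum.lessThan_Suc_shift) (simp add: sum_distrib_left)
  have c6: "3*((1-p)*t)*\<eta> + (2*((1-p)*(p*t)) + 2*((1-p)*(p*t)) + 2*((1-p)*(p*(p*t)))) + (p*(p*(p*t))) * g * S
      = t * g * (1 + p^3 * S)"
    unfolding g_def by (simp add: algebra_simps power2_eq_square power3_eq_cube)
  show ?case unfolding c5 using c1 c2 c3 c4 c6 unfolding g_def \<eta>_def by linarith
qed

lemma valid_FL: "0 \<le> e \<Longrightarrow> e \<le> 1 \<Longrightarrow> valid (FL e m)"
proof (induction m)
  case 0 then show ?case by simp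
next
  case (Suc m)
  have vf: "valid (filtA e)" unfolding filtA_def by (rule valid_Node2) (use Suc.prems in auto)
  have vd: "valid (nodeD e (FL e m))" unfolding nodeD_def by (rule valid_Node2) (use Suc in auto)
  have vb: "valid (nodeB e (FL e m))" unfolding nodeB_def by (rule valid_Node2) (use Suc.prems vf vd in auto)
  show ?case unfolding FL.simps by (rule valid_Node2) (use Suc.prems vb in auto)
qed

lemma valid_Cyc: "0 \<le> p \<Longrightarrow> p \<le> 1 \<Longrightarrow> 0 \<le> e \<Longrightarrow> e \<le> 1 \<Longrightarrow> valid (Cyc p e m n)"
proof (induction n)
  case 0 then show ?case by simp
next
  case (Suc n)
  have vC: "valid fullC" unfolding fullC_def by (rule valid_Node2) auto
  have vD: "valid fullD" unfolding fullD_def by (rule valid_Node2) auto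
  have vd: "valid (cycD p (Cyc p e m n))" unfolding cycD_def by (rule valid_Node2) (use Suc vC in auto)
  have vb: "valid (cycB p (Cyc p e m n))" unfolding cycB_def by (rule valid_Node2) (use Suc.prems vD vd in auto)
  have va: "valid (cycA p (Cyc p e m n))" unfolding cycA_def by (rule valid_Node2) (use Suc.prems vC vb in auto)
  show ?case unfolding Cyc.simps by (rule valid_Node2) (use Suc.prems va valid_FL in auto)
qed


lemma W4_eq: "W4 = Wst (wt (1/4) (1/4) (1/4) (1/4))"
proof (rule ext)
  fix x
  have s: "sqrt (1/4::real) = 1/2" by (rule real_sqrt_unique) (auto simp: power2_eq_square)
  have c: "card {k. x k} = 1 \<longleftrightarrow> (\<exists>j. x = ind j)"
  proof
    assume "card {k. x k} = 1"
    then obtain j where "{k. x k} = {j}" by (auto simp: card_1_singleton_iff)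
    then have "x = ind j" by (auto simp: ind_def fun_eq_iff)
    then show "\<exists>j. x = ind j" by blast
  next
    assume "\<exists>j. x = ind j"
    then obtain j where "x = ind j" by blast
    then have "{k. x k} = {j}" by (auto simp: ind_def)
    then show "card {k. x k} = 1" by simp
  qed
  show "W4 x = Wst (wt (1/4) (1/4) (1/4) (1/4)) x"
  proof (cases "\<exists>j. x = ind j")
    case True
    then obtain j where j: "x = ind j" by blast
    have wj: "wt (1/4) (1/4) (1/4) (1/4) j = 1/4" by (cases j) (auto simp: wt_def)
    have cj: "card {k. x k} = 1" using c True by blast
    have a: "W4 x = complex_of_real (1/2)" unfolding W4_def using cj by simp
    have b: "Wst (wt (1/4) (1/4) (1/4) (1/4)) x = complex_of_real (1/2)"
      unfolding j Wst_ind wj s ..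
    show ?thesis by (simp only: a b)
  next
    case False
    then show ?thesis unfolding W4_def using c by (simp add: Wst_not)
  qed
qed

lemma p_facts:
  defines "p \<equiv> (sqrt 3 - 1) / 2"
  shows "0 < p" "p < 1"
    "(1/4) * (3*(1-p) + 4*(1-p)*p + 2*(1-p)*p^2) = ((3 + sqrt 3)/6) * (1 - p^3)"
proof -
  have s3: "sqrt 3 * sqrt 3 = (3::real)" by simp
  have l: "1 < sqrt (3::real)" by simp
  have u: "sqrt (3::real) < 3"
  proof (rule ccontr)
    assume "\<not> sqrt (3::real) < 3"
    then have h: "3 \<le> sqrt (3::real)" by simp
    then have "3*3 \<le> sqrt (3::real) * sqrt 3" by (intro mult_mono) auto
    then show False using s3 by simp
  qed
  show "0 < p" unfolding p_def using l by simp
  show "p < 1" unfolding p_def using u by simp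
  show "(1/4) * (3*(1-p) + 4*(1-p)*p + 2*(1-p)*p^2) = ((3 + sqrt 3)/6) * (1 - p^3)"
  proof -
    define r where "r = sqrt (3::real)"
    have rr: "r * r = 3" unfolding r_def by simp
    have p2: "p^2 = (2 - r)/2" unfolding p_def r_def[symmetric] using rr
      by (simp add: power2_eq_square field_simps algebra_simps)
    have p3: "p^3 = (3*r - 5)/4"
    proof -
      have "p^3 = p * p^2" by (simp add: power3_eq_cube power2_eq_square)
      also have "\<dots> = ((r - 1)/2) * ((2 - r)/2)" by (metis p2 p_def r_def)
      also have "\<dots> = (3*r - 5)/4" using rr by (simp add: field_simps algebra_simps)
      finally show ?thesis .
    qed
    have pr: "p = (r - 1)/2" unfolding p_def r_def ..
    have L: "(1/4) * (3*(1-p) + 4*(1-p)*p + 2*(1-p)*p^2) = 3/4"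
      unfolding p2 unfolding pr using rr by (simp add: field_simps algebra_simps)
    have R: "((3 + sqrt 3)/6) * (1 - p^3) = 3/4"
      unfolding p3 r_def[symmetric] using rr by (simp add: field_simps algebra_simps)
    show ?thesis by (rule trans[OF L R[symmetric]])
  qed
qed

lemma key_bound:
  fixes y :: real
  assumes "y < (3 + sqrt 3)/6"
  shows "\<exists>T. valid T \<and> y < Val T (wt (1/4) (1/4) (1/4) (1/4))"
proof (cases "y < 0")
  case True
  have "y < Val Leaf (wt (1/4) (1/4) (1/4) (1/4))"
    using True Val_nonneg[of Leaf "wt (1/4) (1/4) (1/4) (1/4)"] by linarith
  then show ?thesis by (intro exI[of _ Leaf]) auto
next
  case False
  define \<tau> :: real where "\<tau> = (3 + sqrt 3)/6"
  define p :: real where "p = (sqrt 3 - 1) / 2"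
  have tp: "\<tau> > 0" unfolding \<tau>_def by (simp add: add_pos_nonneg)
  have p0: "0 < p" and p1: "p < 1" and pid: "(1/4) * (3*(1-p) + 4*(1-p)*p + 2*(1-p)*p^2) = \<tau> * (1 - p^3)"
    using p_facts unfolding p_def \<tau>_def by auto
  define r where "r = y / \<tau>"
  have r0: "0 \<le> r" unfolding r_def using False tp by simp
  have r1: "r < 1" unfolding r_def using assms tp by (simp add: \<tau>_def field_simps)
  have yr: "y = \<tau> * r" unfolding r_def using tp by simp
  define \<delta> where "\<delta> = (1 - r)/4"
  have d0: "0 < \<delta>" and d1: "\<delta> \<le> 1/4" unfolding \<delta>_def using r0 r1 by auto
  have q1: "(1-\<delta>)^2 < 1"
  proof -
    have "(1-\<delta>)^2 < 1^2" by (rule power_strict_mono) (use d0 d1 in auto)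
    then show ?thesis by simp
  qed
  obtain m where m: "((1-\<delta>)^2)^m < \<delta>"
    using real_arch_pow_inv[OF d0 q1] by blast
  obtain n where n: "(p^3)^n < \<delta>"
    using real_arch_pow_inv[OF d0, of "p^3"] p0 p1 by (auto simp: power_less_one_iff)
  define \<eta> where "\<eta> = (1-\<delta>)*(1-((1-\<delta>)^2)^m)"
  define S where "S = (\<Sum>k<n. (p^3)^k)"
  define T where "T = Cyc p \<delta> m n"
  have vT: "valid T" unfolding T_def by (rule valid_Cyc) (use p0 p1 d0 d1 in auto)
  have S0: "S \<ge> 0" unfolding S_def using p0 by (simp add: sum_nonneg)
  have qm0: "((1-\<delta>)^2)^m \<le> 1" using d0 d1 by (simp add: power_le_one)
  have eta0: "0 \<le> \<eta>" and eta1: "\<eta> \<le> 1" unfolding \<eta>_def using d0 d1 qm0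
    by (auto intro!: mult_nonneg_nonneg mult_le_one simp: zero_le_power)
  have V: "Val T (wt (1/4) (1/4) (1/4) (1/4)) \<ge> (1/4) * (3*(1-p)*\<eta> + 4*(1-p)*p + 2*(1-p)*p^2) * S"
    unfolding T_def \<eta>_def S_def by (rule Cyc_val) (use p0 p1 d0 d1 in auto)
  have g: "3*(1-p)*\<eta> + 4*(1-p)*p + 2*(1-p)*p^2 \<ge> \<eta> * (3*(1-p) + 4*(1-p)*p + 2*(1-p)*p^2)"
  proof -
    have "(1-\<eta>) * (4*(1-p)*p + 2*(1-p)*p^2) \<ge> 0"
      using eta1 p0 p1 by (intro mult_nonneg_nonneg) auto
    then show ?thesis by (simp add: algebra_simps)
  qed
  have V2: "Val T (wt (1/4) (1/4) (1/4) (1/4)) \<ge> \<eta> * (\<tau> * (1 - (p^3)^n))"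
  proof -
    have "(1/4) * (3*(1-p)*\<eta> + 4*(1-p)*p + 2*(1-p)*p^2) * S \<ge> (1/4) * (\<eta> * (3*(1-p) + 4*(1-p)*p + 2*(1-p)*p^2)) * S"
      using g S0 by (intro mult_right_mono) auto
    also have "(1/4) * (\<eta> * (3*(1-p) + 4*(1-p)*p + 2*(1-p)*p^2)) * S = \<eta> * ((1/4) * (3*(1-p) + 4*(1-p)*p + 2*(1-p)*p^2)) * S"
      by (simp only: mult.assoc mult.left_commute)
    also have "\<dots> = \<eta> * (\<tau> * (1 - p^3)) * S" by (simp only: pid)
    also have "\<dots> = \<eta> * (\<tau> * ((1 - p^3) * S))" by (simp only: mult.assoc)
    also have "(1 - p^3) * S = 1 - (p^3)^n" unfolding S_def by (rule geo_mult)
    finally show ?thesis using V by linarith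
  qed
  have e1: "\<eta> \<ge> (1-\<delta>)*(1-\<delta>)"
    unfolding \<eta>_def using m d0 d1 by (intro mult_left_mono) auto
  have e2: "1 - (p^3)^n \<ge> 1 - \<delta>" using n by simp
  have e3: "\<eta> * (1 - (p^3)^n) \<ge> (1-\<delta>)*(1-\<delta>)*(1-\<delta>)"
    using e1 e2 d1 eta0 by (intro mult_mono) auto
  have e4: "(1-\<delta>)*(1-\<delta>)*(1-\<delta>) - (1 - 3*\<delta>) = \<delta>*\<delta>*(3-\<delta>)"
    by (simp add: algebra_simps)
  have e5: "\<delta>*\<delta>*(3-\<delta>) \<ge> 0" using d0 d1 by simp
  have e6: "1 - 3*\<delta> > r" unfolding \<delta>_def using r1 by (simp add: field_simps)
  have "\<eta> * (1 - (p^3)^n) > r" using e3 e4 e5 e6 by linarith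
  then have "\<tau> * (\<eta> * (1 - (p^3)^n)) > \<tau> * r" using tp by simp
  then have "y < Val T (wt (1/4) (1/4) (1/4) (1/4))" using V2 yr by (simp add: algebra_simps)
  then show ?thesis using vT by blast
qed

theorem mainTheorem4:
  shows "ereal ((3 + sqrt 3) / 6) \<le> Pmax W4 G_VI"
  unfolding Pmax_def
proof (subst le_SUP_iff, intro allI impI)
  fix y :: ereal
  assume y: "y < ereal ((3 + sqrt 3) / 6)"
  obtain r where r: "r < (3 + sqrt 3)/6" "y \<le> ereal r"
  proof (cases y)
    case (real r) then show ?thesis using that y by auto
  next
    case PInf then show ?thesis using y by simp
  next
    case MInf then show ?thesis using that[of "(3 + sqrt 3)/6 - 1"] by simp
  qed
  obtain T where T: "valid T" "r < Val T (wt (1/4) (1/4) (1/4) (1/4))"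
    using key_bound[OF r(1)] by blast
  have "y < ereal (\<Sum>e\<in>G_VI. prob T W4 e)"
    using r(2) T(2) unfolding W4_eq Val_def by (simp add: le_less_trans)
  then show "\<exists>i\<in>{T. valid T}. y < ereal (\<Sum>e\<in>G_VI. prob i W4 e)" using T(1) by blast
qed

end
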